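(* Let $R$ be a regular ring with unity, let $E$ be its set of idempotents, and let $e,f\in E$. Then $\mathcal L(e)$ and $\mathcal L(f)$ are in perspective in the lattice $L(E)=E/\mathcal L$ if and only if $1\le d_l(e,f)\le 3$.
   Context: A ring is regular if for every $x$ there is $y$ with $xyx=x$. On $E$: $e\,\omega^l\,f$ iff $ef=e$; $e\,\omega^r\,f$ iff $fe=e$; $\mathcal L=\omega^l\cap(\omega^l)^{-1}$, $\mathcal R=\omega^r\cap(\omega^r)^{-1}$ (so $e\,\mathcal L\,f$ iff $Re=Rf$, $e\,\mathcal R\,f$ iff $eR=fR$), with classes $\mathcal L(e)$. $E/\mathcal L$ is ordered by $\mathcal L(e)\le\mathcal L(f)$ iff $e\,\omega^l\,f$; it is isomorphic to the lattice of principal left ideals of $R$ (a complemented modular lattice with least element $\mathcal L(0)$, greatest element $\mathcal L(1)$). Two elements of a lattice are in perspective if they have a common complement. An $E$-sequence of length $m\ge1$ from $e$ to $f$ is a sequence $e=x_0,\dots,x_m=f$ in $E$ with $x_{i-1}\,(\mathcal L\cup\mathcal R)\,x_i$ for each $i$; $d_l(e,f)$ is the least length of an $E$-sequence from $e$ to $f$ with $x_0\,\mathcal L\,x_1$, and $d_l(e,f)=0$ if none exists. *)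

theory Defs
  imports Main
begin

definition regular_ring :: "'a::ring_1 itself \<Rightarrow> bool" where
  "regular_ring _ \<longleftrightarrow> (\<forall>x::'a. \<exists>y. x * y * x = x)"

definition idem :: "'a::ring_1 set" where
  "idem = {e. e * e = e}"

definition omega_l :: "'a::ring_1 \<Rightarrow> 'a \<Rightarrow> bool" where
  "omega_l e f \<longleftrightarrow> e * f = e"

definition omega_r :: "'a::ring_1 \<Rightarrow> 'a \<Rightarrow> bool" where
  "omega_r e f \<longleftrightarrow> f * e = e"

definition L_rel :: "'a::ring_1 \<Rightarrow> 'a \<Rightarrow> bool" where
  "L_rel e f \<longleftrightarrow> omega_l e f \<and> omega_l f e"

definition R_rel :: "'a::ring_1 \<Rightarrow> 'a \<Rightarrow> bool" where
  "R_rel e f \<longleftrightarrow> omega_r e f \<and> omega_r f e"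

definition L_class :: "'a::ring_1 \<Rightarrow> 'a set" where
  "L_class e = {f \<in> idem. L_rel e f}"

definition EL :: "'a::ring_1 set set" where
  "EL = L_class ` idem"

definition EL_le :: "'a::ring_1 set \<Rightarrow> 'a set \<Rightarrow> bool" where
  "EL_le X Y \<longleftrightarrow> (\<exists>e f. e \<in> idem \<and> f \<in> idem \<and> X = L_class e \<and> Y = L_class f \<and> omega_l e f)"

text \<open>Complements in the lattice E/L (bottom L(0), top L(1)):
  X meet Y = L(0) and X join Y = L(1), expressed via lower/upper bounds.\<close>
definition EL_compl :: "'a::ring_1 set \<Rightarrow> 'a set \<Rightarrow> bool" where
  "EL_compl X Y \<longleftrightarrow> X \<in> EL \<and> Y \<in> EL \<and>
     (\<forall>Z\<in>EL. EL_le Z X \<and> EL_le Z Y \<longrightarrow> EL_le Z (L_class 0)) \<and>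
     (\<forall>Z\<in>EL. EL_le X Z \<and> EL_le Y Z \<longrightarrow> EL_le (L_class 1) Z)"

definition in_perspective :: "'a::ring_1 set \<Rightarrow> 'a set \<Rightarrow> bool" where
  "in_perspective X Y \<longleftrightarrow> (\<exists>Z\<in>EL. EL_compl X Z \<and> EL_compl Y Z)"

definition E_seq_l :: "'a::ring_1 \<Rightarrow> 'a \<Rightarrow> nat \<Rightarrow> bool" where
  "E_seq_l e f m \<longleftrightarrow> m \<ge> 1 \<and> (\<exists>x :: nat \<Rightarrow> 'a.
     x 0 = e \<and> x m = f \<and> (\<forall>i\<le>m. x i \<in> idem) \<and>
     (\<forall>i\<in>{1..m}. L_rel (x (i - 1)) (x i) \<or> R_rel (x (i - 1)) (x i)) \<and>
     L_rel (x 0) (x 1))"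

definition d_l :: "'a::ring_1 \<Rightarrow> 'a \<Rightarrow> nat" where
  "d_l e f = (if \<exists>m. E_seq_l e f m then LEAST m. E_seq_l e f m else 0)"

end

theory Submission
  imports Defs
begin

lemma idem_iff: "e \<in> idem \<longleftrightarrow> e * e = e" by (simp add: idem_def)

lemma L_rel_iff: "L_rel e f \<longleftrightarrow> e * f = e \<and> f * e = f"
  by (auto simp: L_rel_def omega_l_def)

lemma R_rel_iff: "R_rel e f \<longleftrightarrow> f * e = e \<and> e * f = f"
  by (auto simp: R_rel_def omega_r_def)

lemma L_trans: "L_rel (a::'a::ring_1) b \<Longrightarrow> L_rel b c \<Longrightarrow> L_rel a c"
  unfolding L_rel_iff by (metis mult.assoc)

lemma R_trans: "R_rel (a::'a::ring_1) b \<Longrightarrow> R_rel b c \<Longrightarrow> R_rel a c"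
  unfolding R_rel_iff by (metis mult.assoc)

lemma L_sym: "L_rel a b \<Longrightarrow> L_rel b a" unfolding L_rel_iff by auto

lemma L_refl: "(a::'a::ring_1) \<in> idem \<Longrightarrow> L_rel a a" unfolding L_rel_iff idem_iff by auto
lemma R_refl: "(a::'a::ring_1) \<in> idem \<Longrightarrow> R_rel a a" unfolding R_rel_iff idem_iff by auto

lemma L_class_mem: "(e::'a::ring_1) \<in> idem \<Longrightarrow> e \<in> L_class e"
  by (simp add: L_class_def L_refl)

lemma L_class_eq: "(e::'a::ring_1) \<in> idem \<Longrightarrow> a \<in> idem \<Longrightarrow> L_rel e a \<Longrightarrow> L_class e = L_class a"
  unfolding L_class_def by (auto intro: L_trans L_sym)

lemma EL_le_iff:
  assumes "(e::'a::ring_1) \<in> idem" "f \<in> idem"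
  shows "EL_le (L_class e) (L_class f) \<longleftrightarrow> e * f = e"
proof
  assume "e * f = e" then show "EL_le (L_class e) (L_class f)"
    using assms by (auto simp: EL_le_def omega_l_def)
next
  assume "EL_le (L_class e) (L_class f)"
  then obtain e' f' where h: "e' \<in> idem" "f' \<in> idem" "L_class e = L_class e'"
    "L_class f = L_class f'" "e' * f' = e'" by (auto simp: EL_le_def omega_l_def)
  have "e \<in> L_class e'" using h(3) L_class_mem[OF assms(1)] by simp
  then have 1: "e * e' = e" by (simp add: L_class_def L_rel_iff)
  have "f \<in> L_class f'" using h(4) L_class_mem[OF assms(2)] by simp
  then have 2: "f' * f = f'" by (simp add: L_class_def L_rel_iff)
  have "e' * f = e'" using 2 h(5) by (metis mult.assoc)
  then show "e * f = e" using 1 by (metis mult.assoc)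
qed

lemma zero_idem: "(0::'a::ring_1) \<in> idem" by (simp add: idem_iff)
lemma one_idem: "(1::'a::ring_1) \<in> idem" by (simp add: idem_iff)
lemma one_minus_idem: "(a::'a::ring_1) \<in> idem \<Longrightarrow> 1 - a \<in> idem"
  by (simp add: idem_iff algebra_simps)

lemma EL_cases: "Z \<in> EL \<Longrightarrow> (\<And>z. z \<in> idem \<Longrightarrow> Z = L_class z \<Longrightarrow> P) \<Longrightarrow> P"
  by (auto simp: EL_def)

lemma compl_lemma:
  fixes a b :: "'a::ring_1"
  assumes ai: "a \<in> idem" and bi: "b \<in> idem" and ba: "b * a = a" and ab: "a * b = b"
  shows "EL_compl (L_class b) (L_class (1 - a))"
proof -
  have ci: "1 - a \<in> idem" using one_minus_idem[OF ai] .
  have aa: "a * a = a" using ai by (simp add: idem_iff)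
  have bb: "b * b = b" using bi by (simp add: idem_iff)
  show ?thesis unfolding EL_compl_def
  proof (intro conjI ballI impI)
    show "L_class b \<in> EL" using bi by (simp add: EL_def)
    show "L_class (1 - a) \<in> EL" using ci by (simp add: EL_def)
  next
    fix Z assume "Z \<in> EL" and h: "EL_le Z (L_class b) \<and> EL_le Z (L_class (1 - a))"
    then obtain z where zi: "z \<in> idem" and Z: "Z = L_class z" by (auto simp: EL_def)
    have 1: "z * b = z" using h Z EL_le_iff[OF zi bi] by simp
    have 2: "z * (1 - a) = z" using h Z EL_le_iff[OF zi ci] by simp
    have "z * a = 0" using 2 by (simp add: algebra_simps)
    then have "z = 0" using 1 ab by (metis mult.assoc mult_zero_left)
    then show "EL_le Z (L_class 0)" using Z EL_le_iff[OF zi zero_idem] by simp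
  next
    fix Z assume "Z \<in> EL" and h: "EL_le (L_class b) Z \<and> EL_le (L_class (1 - a)) Z"
    then obtain z where zi: "z \<in> idem" and Z: "Z = L_class z" by (auto simp: EL_def)
    have 1: "b * z = b" using h Z EL_le_iff[OF bi zi] by simp
    have 2: "(1 - a) * z = 1 - a" using h Z EL_le_iff[OF ci zi] by simp
    have 3: "(1 - b) * (1 - a) = 1 - b" using ba by (simp add: algebra_simps)
    have "(1 - b) * z = 1 - b" using 2 3 by (metis mult.assoc)
    then have "z = 1" using 1 by (simp add: algebra_simps)
    then show "EL_le (L_class 1) Z" using Z EL_le_iff[OF one_idem zi] by simp
  qed
qed

lemma decomp:
  fixes e g :: "'a::ring_1"
  assumes reg: "regular_ring TYPE('a)" and ei: "e \<in> idem" and gi: "g \<in> idem"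
    and C: "EL_compl (L_class e) (L_class g)"
  shows "\<exists>a\<in>idem. L_rel e a \<and> (1 - a) * g = 1 - a \<and> g * (1 - a) = g"
proof -
  have ee: "e * e = e" using ei by (simp add: idem_iff)
  have gg: "g * g = g" using gi by (simp add: idem_iff)
  have meet: "z = 0" if zi: "z \<in> idem" and "z * e = z" "z * g = z" for z
  proof -
    have "L_class z \<in> EL" using zi by (simp add: EL_def)
    moreover have "EL_le (L_class z) (L_class e)" using that EL_le_iff[OF zi ei] by simp
    moreover have "EL_le (L_class z) (L_class g)" using that EL_le_iff[OF zi gi] by simp
    ultimately have "EL_le (L_class z) (L_class 0)" using C unfolding EL_compl_def by blast
    then show ?thesis using EL_le_iff[OF zi zero_idem] by simp
  qed
  have meet': "x = 0" if "x * e = x" "x * g = x" for x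
  proof -
    obtain w where w: "x * w * x = x" using reg unfolding regular_ring_def by blast
    let ?p = "w * x"
    have "?p \<in> idem" using w by (simp add: idem_iff mult.assoc[symmetric]) (metis mult.assoc)
    moreover have "?p * e = ?p" using that by (simp add: mult.assoc)
    moreover have "?p * g = ?p" using that by (simp add: mult.assoc)
    ultimately have "?p = 0" by (rule meet)
    then show ?thesis using w by (metis mult.assoc mult_zero_right)
  qed
  have join: "h = 1" if hi: "h \<in> idem" and "e * h = e" "g * h = g" for h
  proof -
    have "L_class h \<in> EL" using hi by (simp add: EL_def)
    moreover have "EL_le (L_class e) (L_class h)" using that EL_le_iff[OF ei hi] by simp
    moreover have "EL_le (L_class g) (L_class h)" using that EL_le_iff[OF gi hi] by simp
    ultimately have "EL_le (L_class 1) (L_class h)" using C unfolding EL_compl_def by blast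
    then show ?thesis using EL_le_iff[OF one_idem hi] by simp
  qed
  define y where "y = g * (1 - e)"
  obtain z where yz: "y * z * y = y" using reg unfolding regular_ring_def by blast
  define h0 where "h0 = z * y"
  define u where "u = (1 - e) * h0"
  define h where "h = e + u"
  have h0e: "h0 * e = 0" unfolding h0_def y_def using ee by (simp add: algebra_simps)
  have h0h0: "h0 * h0 = h0" unfolding h0_def using yz by (metis mult.assoc)
  have ue: "u * e = 0" unfolding u_def using h0e by (simp add: mult.assoc)
  have eu: "e * u = 0" unfolding u_def using ee by (simp add: algebra_simps mult.assoc[symmetric])
  have "h0 * u = h0" unfolding u_def using h0e h0h0
    by (simp add: algebra_simps mult.assoc[symmetric])
  then have uu: "u * u = u" unfolding u_def by (metis mult.assoc)
  have hh: "h * h = h" unfolding h_def using ee ue eu uu by (simp add: algebra_simps)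
  have eh: "e * h = e" unfolding h_def using ee eu by (simp add: algebra_simps)
  have h0h: "h0 * h = h0" unfolding h_def using h0e \<open>h0 * u = h0\<close> by (simp add: algebra_simps)
  have gdec: "g = g * e + y" unfolding y_def by (simp add: algebra_simps)
  have "y * h = y" using yz h0h unfolding h0_def by (metis mult.assoc)
  moreover have "g * e * h = g * e" using eh by (simp add: mult.assoc)
  ultimately have gh: "g * h = g" using gdec by (metis distrib_right)
  have h1: "h = 1" using join[OF _ eh gh] hh by (simp add: idem_iff)
  define a where "a = 1 - (1 - e) * z * g"
  have a1e: "a * (1 - e) = 0"
  proof -
    have "a * (1 - e) = (1 - e) - (1 - e) * z * y" unfolding a_def y_def
      by (simp add: algebra_simps)
    also have "\<dots> = 1 - h" unfolding h_def u_def h0_def by (simp add: algebra_simps)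
    finally show ?thesis using h1 by simp
  qed
  have ae: "a * e = a" using a1e by (simp add: algebra_simps)
  have omag: "(1 - a) * g = 1 - a" unfolding a_def using gg by (simp add: mult.assoc)
  have aa: "a * a = a"
  proof -
    have "a * (1 - a) = 0"
    proof (rule meet')
      show "a * (1 - a) * e = a * (1 - a)" using ae by (simp add: algebra_simps)
      show "a * (1 - a) * g = a * (1 - a)" using omag by (simp add: mult.assoc)
    qed
    then show ?thesis by (simp add: algebra_simps)
  qed
  have ea: "e * a = e"
  proof -
    have "e * (1 - a) = 0"
    proof (rule meet')
      show "e * (1 - a) * e = e * (1 - a)" using ae ee by (simp add: algebra_simps)
      show "e * (1 - a) * g = e * (1 - a)" using omag by (simp add: mult.assoc)
    qed
    then show ?thesis by (simp add: algebra_simps)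
  qed
  have ga: "g * a = 0"
  proof (rule meet')
    show "g * a * e = g * a" using ae by (simp add: mult.assoc)
    have "g * (1 - a) * g = g * (1 - a)" using omag by (simp add: mult.assoc)
    then show "g * a * g = g * a" using gg by (simp add: algebra_simps)
  qed
  have "g * (1 - a) = g" using ga by (simp add: algebra_simps)
  moreover have "a \<in> idem" using aa by (simp add: idem_iff)
  moreover have "L_rel e a" using ea ae by (simp add: L_rel_iff)
  ultimately show ?thesis using omag by blast
qed

lemma seq_form:
  fixes e f :: "'a::ring_1"
  assumes "E_seq_l e f m" "m \<le> 3"
  shows "\<exists>a\<in>idem. \<exists>b\<in>idem. L_rel e a \<and> R_rel a b \<and> L_rel b f"
proof -
  obtain x :: "nat \<Rightarrow> 'a" where x: "x 0 = e" "x m = f" "\<forall>i\<le>m. x i \<in> idem"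
    "\<forall>i\<in>{1..m}. L_rel (x (i - 1)) (x i) \<or> R_rel (x (i - 1)) (x i)" "L_rel (x 0) (x 1)"
    and m1: "m \<ge> 1" using assms(1) unfolding E_seq_l_def by blast
  have fi: "f \<in> idem" using x(2,3) by auto
  have "m = 1 \<or> m = 2 \<or> m = 3" using m1 assms(2) by auto
  moreover {
    assume "m = 1"
    then have ?thesis using x fi by (metis L_refl R_refl)
  } moreover {
    assume m: "m = 2"
    have i1: "x 1 \<in> idem" using x(3) m by auto
    have "(2::nat) \<in> {1..m}" using m by simp
    from x(4)[rule_format, OF this]
    have "L_rel (x 1) f \<or> R_rel (x 1) f" using x(2) m by simp
    then have ?thesis using x(1,5) fi i1 by (metis L_refl R_refl L_trans)
  } moreover {
    assume m: "m = 3"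
    have i1: "x 1 \<in> idem" and i2: "x 2 \<in> idem" using x(3) m by auto
    have "(2::nat) \<in> {1..m}" using m by simp
    from x(4)[rule_format, OF this]
    have s2: "L_rel (x 1) (x 2) \<or> R_rel (x 1) (x 2)" by simp
    have "(3::nat) \<in> {1..m}" using m by simp
    from x(4)[rule_format, OF this]
    have s3: "L_rel (x 2) f \<or> R_rel (x 2) f" using x(2) m by simp
    have L1: "L_rel e (x 1)" using x(1,5) by simp
    from s2 s3 have ?thesis
    proof (elim disjE)
      assume "L_rel (x 1) (x 2)" "L_rel (x 2) f"
      then show ?thesis using L1 fi by (meson L_trans L_refl R_refl)
    next
      assume "L_rel (x 1) (x 2)" "R_rel (x 2) f"
      then show ?thesis using L1 fi i2 by (meson L_trans L_refl R_refl)
    next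
      assume "R_rel (x 1) (x 2)" "L_rel (x 2) f"
      then show ?thesis using L1 i1 i2 by blast
    next
      assume "R_rel (x 1) (x 2)" "R_rel (x 2) f"
      then show ?thesis using L1 fi i1 by (meson R_trans L_refl)
    qed
  }
  ultimately show ?thesis by blast
qed

theorem proposition4p3:
  fixes e f :: "'a::ring_1"
  assumes "regular_ring TYPE('a)"
    and "e \<in> idem" and "f \<in> idem"
  shows "in_perspective (L_class e) (L_class f) \<longleftrightarrow> 1 \<le> d_l e f \<and> d_l e f \<le> 3"
proof
  assume "in_perspective (L_class e) (L_class f)"
  then obtain Z where "Z \<in> EL" "EL_compl (L_class e) Z" "EL_compl (L_class f) Z"
    unfolding in_perspective_def by blast
  then obtain g where gi: "g \<in> idem" and C1: "EL_compl (L_class e) (L_class g)"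
    and C2: "EL_compl (L_class f) (L_class g)" by (metis EL_cases)
  obtain a where ai: "a \<in> idem" and ea: "L_rel e a" and a1: "(1 - a) * g = 1 - a"
    and a2: "g * (1 - a) = g" using decomp[OF assms(1,2) gi C1] by blast
  obtain b where bi: "b \<in> idem" and fb: "L_rel f b" and b1: "(1 - b) * g = 1 - b"
    and b2: "g * (1 - b) = g" using decomp[OF assms(1,3) gi C2] by blast
  have "(1 - a) * (1 - b) = 1 - a" using a1 b2 by (metis mult.assoc)
  then have ab: "a * b = b" by (simp add: algebra_simps)
  have "(1 - b) * (1 - a) = 1 - b" using b1 a2 by (metis mult.assoc)
  then have ba: "b * a = a" by (simp add: algebra_simps)
  define x where "x = (\<lambda>i::nat. if i = 0 then e else if i = 1 then a else if i = 2 then b else f)"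
  have S: "E_seq_l e f 3" unfolding E_seq_l_def
  proof (intro conjI exI[of _ x])
    show "\<forall>i\<le>3. x i \<in> idem" using assms ai bi by (auto simp: x_def)
    show "\<forall>i\<in>{1..3}. L_rel (x (i - 1)) (x i) \<or> R_rel (x (i - 1)) (x i)"
    proof
      fix i :: nat assume "i \<in> {1..3}"
      then have "i = 1 \<or> i = 2 \<or> i = 3" by auto
      then show "L_rel (x (i - 1)) (x i) \<or> R_rel (x (i - 1)) (x i)"
        using ea ab ba fb by (auto simp: x_def R_rel_iff intro: L_sym)
    qed
  qed (auto simp: x_def ea)
  then have "(LEAST m. E_seq_l e f m) \<le> 3" by (rule Least_le)
  moreover have "E_seq_l e f (LEAST m. E_seq_l e f m)" using S by (rule LeastI)
  moreover have "d_l e f = (LEAST m. E_seq_l e f m)" using S unfolding d_l_def by auto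
  ultimately show "1 \<le> d_l e f \<and> d_l e f \<le> 3" unfolding E_seq_l_def by auto
next
  assume h: "1 \<le> d_l e f \<and> d_l e f \<le> 3"
  then have ex: "\<exists>m. E_seq_l e f m" unfolding d_l_def by (auto split: if_splits)
  then have "E_seq_l e f (d_l e f)" unfolding d_l_def by (simp add: LeastI_ex)
  then obtain a b where ai: "a \<in> idem" and bi: "b \<in> idem" and ea: "L_rel e a"
    and ab: "R_rel a b" and bf: "L_rel b f" using seq_form h by blast
  have "EL_compl (L_class a) (L_class (1 - a))"
    using compl_lemma[OF ai ai] ai by (simp add: idem_iff)
  moreover have "EL_compl (L_class b) (L_class (1 - a))"
    using compl_lemma[OF ai bi] ab by (simp add: R_rel_iff)
  moreover have "L_class e = L_class a" using L_class_eq[OF assms(2) ai ea] .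
  moreover have "L_class f = L_class b" using L_class_eq[OF bi assms(3) bf] by simp
  moreover have "L_class (1 - a) \<in> EL" using one_minus_idem[OF ai] by (simp add: EL_def)
  ultimately show "in_perspective (L_class e) (L_class f)" unfolding in_perspective_def by auto
qed

end
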